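(* Let $A$ be a guidable nondeterministic parity tree automaton over $\Sigma$ and $J$ an index with $\min(J)\in\{1,2\}$. Suppose $\mathcal{L}(A)$ is $J$-feasible, witnessed by a $J$-parity tree automaton $B$ with $\mathcal{L}(B)=\mathcal{L}(A)$, and let $N=|A|\,|B|+1$ where $|A|,|B|$ are the numbers of states. Then for every $\Sigma$-tree $t\in\mathcal{L}(A)$, every accepting run $\rho_B$ of $B$ on $t$, and $\rho_A=g(\rho_B)$ the run of $A$ on $t$ guided by $\rho_B$ via an acceptance-preserving guiding function $g$ from $B$ to $A$, Eve wins $\mathrm{Reg}^J_N(\rho_A)$, where $\rho_A$ is viewed as a parity graph.
   Context: An index is a nonempty finite interval of $\mathbb{N}$; a priority sequence is parity accepting if its $\limsup$ is even. A nondeterministic $I$-parity tree automaton is $(\Sigma,Q,q_I,\Delta,\Omega)$, $Q$ finite, $\Delta\subseteq Q\times\Sigma\times Q\times Q$ complete, $\Omega:\Delta\to I^2$. A run on $t:\{0,1\}^*\to\Sigma$ is $\rho:\{0,1\}^*\to\Delta$ with $\rho(\varepsilon)$ from $q_I$, $\rho(u)=(q,t(u),q_0,q_1)$, $\rho(u\cdot d)$ from $q_d$; the edge $u\to u\cdot d$ has priority the $d$-th component of $\Omega(\rho(u))$; accepting means every branch has parity accepting priority sequence. $\mathcal{L}(A)$ = trees with an accepting run; a language is $J$-feasible if recognised by some $J$-parity automaton. A guiding function from $B$ to $A$ is $g:Q_A\times\Delta_B\to\Delta_A$ with $g(p,(q,a,q_0,q_1))=(p,a,p_0,p_1)$; $g(\rho)(u)=g(s(u),\rho(u))=(s(u),t(u),p_0,p_1)$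 with $s(\varepsilon)=q_{I,A}$, $s(u\cdot d)=p_d$; it preserves acceptance if $g(\rho)$ is accepting whenever $\rho$ is. $A$ is guidable if every $B$ with $\mathcal{L}(B)=\mathcal{L}(A)$ admits an acceptance-preserving guiding function to $A$. A run $\rho$ is viewed as the parity graph with vertices $\{0,1\}^*$, edges $u\to u\cdot d$ labelled by their priorities, started at $\varepsilon$. Priority transduction game $\mathrm{Reg}^J_N(G)$ over a parity graph $G=(V,E,L)$ with priorities in $I$: configurations consist of a vertex, registers $r_j\in I$ for each $j$ with $2j\in J$ (plus $r_0$ if $1\in J$), counters $c_{i,j}\in\mathbb{N}$ for odd $i\in I$ and register indices $j$; initially counters $0$, registers $\min(I)$. Each step: (a) Adam chooses an outgoing edge $e$; (b) Eve chooses a register $r_j$; (c) output $w=1$ if $j=0$; else $w=2j$ if $r_j$ even; else if $c_{r_j,j}=N$ then $w=2j+1$, $c_{r_j,j}:=0$, and Eve loses immediately if $2j+1\notin J$; else $w=2j$, $c_{r_j,j}:=c_{r_j,j}+1$; (d) if $L(e)$ even, $i:=L(e)$, else Eve chooses odd $i\ge L(e)$ in $I$; then $c_{i',j}:=0$ for $i'<i$, $c_{r_j,j'}:=0$ for $j'<j$, $r_{j'}:=\max(i,r_{j'})$ for $j'>j$, $r_j:=i$. Eve wins iff she never loses immediately and the output sequence is parity accepting. *)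

theory Defs
  imports Main "HOL-Library.Extended_Nat" "HOL-Library.Liminf_Limsup"
begin

text \<open>Tree nodes are bool lists (False = direction 0, True = direction 1);
  the child u.d of u is u @ [d]. States of all automata are natural numbers
  (every finite state set is isomorphic to a finite set of naturals).
  A transition is (q, a, q0, q1).\<close>

type_synonym 'a trans = "nat \<times> 'a \<times> nat \<times> nat"

record 'a aut =
  states :: "nat set"
  init :: nat
  delta :: "'a trans set"
  pri :: "'a trans \<Rightarrow> nat \<times> nat"

definition index :: "nat set \<Rightarrow> bool" where
  "index I \<longleftrightarrow> (\<exists>a b. a \<le> b \<and> I = {a..b})"

definition parity_acc :: "(nat \<Rightarrow> nat) \<Rightarrow> bool" where
  "parity_acc w \<longleftrightarrow> (\<exists>m. even m \<and> limsup (\<lambda>n. enat (w n)) = enat m)"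

definition is_aut :: "'a set \<Rightarrow> nat set \<Rightarrow> 'a aut \<Rightarrow> bool" where
  "is_aut \<Sigma> I A \<longleftrightarrow> index I \<and> finite (states A) \<and> init A \<in> states A
     \<and> delta A \<subseteq> states A \<times> \<Sigma> \<times> states A \<times> states A
     \<and> (\<forall>q\<in>states A. \<forall>a\<in>\<Sigma>. \<exists>q0 q1. (q, a, q0, q1) \<in> delta A)
     \<and> (\<forall>\<tau>\<in>delta A. fst (pri A \<tau>) \<in> I \<and> snd (pri A \<tau>) \<in> I)"

definition is_tree :: "'a set \<Rightarrow> (bool list \<Rightarrow> 'a) \<Rightarrow> bool" where
  "is_tree \<Sigma> t \<longleftrightarrow> (\<forall>u. t u \<in> \<Sigma>)"

definition child_state :: "bool \<Rightarrow> 'a trans \<Rightarrow> nat" where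
  "child_state d \<tau> = (case \<tau> of (q, a, q0, q1) \<Rightarrow> if d then q1 else q0)"

definition edge_pri :: "'a aut \<Rightarrow> 'a trans \<Rightarrow> bool \<Rightarrow> nat" where
  "edge_pri A \<tau> d = (if d then snd (pri A \<tau>) else fst (pri A \<tau>))"

definition is_run :: "'a aut \<Rightarrow> (bool list \<Rightarrow> 'a) \<Rightarrow> (bool list \<Rightarrow> 'a trans) \<Rightarrow> bool" where
  "is_run A t \<rho> \<longleftrightarrow> fst (\<rho> []) = init A \<and>
     (\<forall>u. \<rho> u \<in> delta A \<and> fst (snd (\<rho> u)) = t u \<and>
          (\<forall>d. fst (\<rho> (u @ [d])) = child_state d (\<rho> u)))"

definition accepting_run :: "'a aut \<Rightarrow> (bool list \<Rightarrow> 'a) \<Rightarrow> (bool list \<Rightarrow> 'a trans) \<Rightarrow> bool" where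
  "accepting_run A t \<rho> \<longleftrightarrow> is_run A t \<rho> \<and>
     (\<forall>\<beta> :: nat \<Rightarrow> bool. parity_acc (\<lambda>n. edge_pri A (\<rho> (map \<beta> [0..<n])) (\<beta> n)))"

definition lang :: "'a set \<Rightarrow> 'a aut \<Rightarrow> (bool list \<Rightarrow> 'a) set" where
  "lang \<Sigma> A = {t. is_tree \<Sigma> t \<and> (\<exists>\<rho>. accepting_run A t \<rho>)}"

definition is_guiding_fn :: "'a aut \<Rightarrow> 'a aut \<Rightarrow> (nat \<Rightarrow> 'a trans \<Rightarrow> 'a trans) \<Rightarrow> bool" where
  "is_guiding_fn A B g \<longleftrightarrow> (\<forall>p\<in>states A. \<forall>\<tau>\<in>delta B.
      g p \<tau> \<in> delta A \<and> fst (g p \<tau>) = p \<and> fst (snd (g p \<tau>)) = fst (snd \<tau>))"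

text \<open>State s(u) of the guided run, computed on the reversed node u.\<close>
fun guided_state_rev :: "(nat \<Rightarrow> 'a trans \<Rightarrow> 'a trans) \<Rightarrow> nat \<Rightarrow> (bool list \<Rightarrow> 'a trans)
    \<Rightarrow> bool list \<Rightarrow> nat" where
  "guided_state_rev g q0 \<rho> [] = q0"
| "guided_state_rev g q0 \<rho> (d # ru) =
     child_state d (g (guided_state_rev g q0 \<rho> ru) (\<rho> (rev ru)))"

definition guided_run :: "'a aut \<Rightarrow> (nat \<Rightarrow> 'a trans \<Rightarrow> 'a trans) \<Rightarrow> (bool list \<Rightarrow> 'a trans)
    \<Rightarrow> bool list \<Rightarrow> 'a trans" where
  "guided_run A g \<rho> u = g (guided_state_rev g (init A) \<rho> (rev u)) (\<rho> u)"

definition preserves_acc :: "'a set \<Rightarrow> 'a aut \<Rightarrow> 'a aut \<Rightarrow> (nat \<Rightarrow> 'a trans \<Rightarrow> 'a trans) \<Rightarrow> bool" where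
  "preserves_acc \<Sigma> A B g \<longleftrightarrow> (\<forall>t \<rho>. is_tree \<Sigma> t \<longrightarrow> accepting_run B t \<rho> \<longrightarrow>
      accepting_run A t (guided_run A g \<rho>))"

definition guidable :: "'a set \<Rightarrow> 'a aut \<Rightarrow> bool" where
  "guidable \<Sigma> A \<longleftrightarrow> (\<forall>B J. is_aut \<Sigma> J B \<longrightarrow> lang \<Sigma> B = lang \<Sigma> A \<longrightarrow>
      (\<exists>g. is_guiding_fn A B g \<and> preserves_acc \<Sigma> A B g))"

text \<open>Parity graphs: a set of labelled edges (source, priority, target) and an initial vertex.
  A run is viewed as the parity graph on nodes with edges u \<rightarrow> u.d.\<close>
definition run_graph :: "'a aut \<Rightarrow> (bool list \<Rightarrow> 'a trans)
    \<Rightarrow> (bool list \<times> nat \<times> bool list) set \<times> bool list" where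
  "run_graph A \<rho> = ({(u, edge_pri A (\<rho> u) d, u @ [d]) | u d. True}, [])"

definition is_play :: "('v \<times> nat \<times> 'v) set \<Rightarrow> 'v \<Rightarrow> (nat \<Rightarrow> 'v \<times> nat \<times> 'v) \<Rightarrow> bool" where
  "is_play E v0 e \<longleftrightarrow> (\<forall>n. e n \<in> E) \<and> fst (e 0) = v0 \<and>
     (\<forall>n. fst (e (Suc n)) = snd (snd (e n)))"

definition reg_indices :: "nat set \<Rightarrow> nat set" where
  "reg_indices J = {j. 2 * j \<in> J \<or> (j = 0 \<and> 1 \<in> J)}"

text \<open>Step (c): output w, whether Eve loses immediately, updated counters.\<close>
definition reg_output :: "nat set \<Rightarrow> nat \<Rightarrow> (nat \<Rightarrow> nat) \<Rightarrow> (nat \<times> nat \<Rightarrow> nat) \<Rightarrow> nat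
    \<Rightarrow> nat \<times> bool \<times> (nat \<times> nat \<Rightarrow> nat)" where
  "reg_output J N r c j =
    (if j = 0 then (1, False, c)
     else if even (r j) then (2 * j, False, c)
     else if c (r j, j) = N then (2 * j + 1, 2 * j + 1 \<notin> J, c((r j, j) := 0))
     else (2 * j, False, c((r j, j) := Suc (c (r j, j)))))"

text \<open>Step (d) with the priority i already determined.\<close>
definition reg_update :: "nat \<Rightarrow> nat \<Rightarrow> (nat \<Rightarrow> nat) \<Rightarrow> (nat \<times> nat \<Rightarrow> nat)
    \<Rightarrow> (nat \<Rightarrow> nat) \<times> (nat \<times> nat \<Rightarrow> nat)" where
  "reg_update j i r c =
    ((\<lambda>j'. if j' = j then i else if j < j' then max i (r j') else r j'),
     (\<lambda>(i', j'). if (j' = j \<and> i' < i) \<or> (i' = r j \<and> j' < j) then 0 else c (i', j')))"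

definition chosen_prio :: "nat \<Rightarrow> nat \<Rightarrow> nat" where
  "chosen_prio L ic = (if even L then L else ic)"

text \<open>Configuration (registers, counters) before step n, given Adam's edges e and
  Eve's choices ch n = (register index, odd priority chosen if needed).\<close>
fun reg_conf :: "nat set \<Rightarrow> nat set \<Rightarrow> nat \<Rightarrow> (nat \<Rightarrow> 'v \<times> nat \<times> 'v) \<Rightarrow> (nat \<Rightarrow> nat \<times> nat)
    \<Rightarrow> nat \<Rightarrow> (nat \<Rightarrow> nat) \<times> (nat \<times> nat \<Rightarrow> nat)" where
  "reg_conf I J N e ch 0 = ((\<lambda>_. Min I), (\<lambda>_. 0))"
| "reg_conf I J N e ch (Suc n) =
     (let (r, c) = reg_conf I J N e ch n;
          (w, l, c1) = reg_output J N r c (fst (ch n))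
      in reg_update (fst (ch n)) (chosen_prio (fst (snd (e n))) (snd (ch n))) r c1)"

definition reg_out :: "nat set \<Rightarrow> nat set \<Rightarrow> nat \<Rightarrow> (nat \<Rightarrow> 'v \<times> nat \<times> 'v) \<Rightarrow> (nat \<Rightarrow> nat \<times> nat)
    \<Rightarrow> nat \<Rightarrow> nat \<times> bool" where
  "reg_out I J N e ch n =
     (let (r, c) = reg_conf I J N e ch n; (w, l, c1) = reg_output J N r c (fst (ch n)) in (w, l))"

definition legal_choice :: "nat set \<Rightarrow> nat set \<Rightarrow> nat \<Rightarrow> nat \<times> nat \<Rightarrow> bool" where
  "legal_choice I J L ch \<longleftrightarrow> fst ch \<in> reg_indices J \<and>
     (odd L \<longrightarrow> odd (snd ch) \<and> L \<le> snd ch \<and> snd ch \<in> I)"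

text \<open>Eve wins Reg^J_N(G): she has a strategy (seeing the history of Adam's edges,
  including the current one) such that on every play her moves are legal, she never
  loses immediately and the output sequence is parity accepting.\<close>
definition eve_wins_reg :: "nat set \<Rightarrow> nat set \<Rightarrow> nat \<Rightarrow> ('v \<times> nat \<times> 'v) set \<times> 'v \<Rightarrow> bool" where
  "eve_wins_reg I J N G \<longleftrightarrow>
     (\<exists>\<sigma> :: ('v \<times> nat \<times> 'v) list \<Rightarrow> nat \<times> nat. \<forall>e. is_play (fst G) (snd G) e \<longrightarrow>
        (let ch = (\<lambda>n. \<sigma> (map e [0..<Suc n])) in
          (\<forall>n. legal_choice I J (fst (snd (e n))) (ch n) \<and> \<not> snd (reg_out I J N e ch n)) \<and>
          parity_acc (\<lambda>n. fst (reg_out I J N e ch n))))"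

end

theory Submission
  imports Defs
begin

definition lim_is :: "(nat \<Rightarrow> nat) \<Rightarrow> nat \<Rightarrow> bool" where
  "lim_is s M \<longleftrightarrow> (\<exists>n0. \<forall>n\<ge>n0. s n \<le> M) \<and> (\<forall>n. \<exists>m\<ge>n. s m = M)"

lemma lim_is_limsup:
  assumes "lim_is s M" shows "limsup (\<lambda>n. enat (s n)) = enat M"
proof -
  obtain n0 where n0: "\<forall>n\<ge>n0. s n \<le> M" and fr: "\<forall>n. \<exists>m\<ge>n. s m = M"
    using assms unfolding lim_is_def by blast
  have ge: "enat M \<le> (SUP m\<in>{n..}. enat (s m))" for n
  proof -
    obtain m where "m \<ge> n" "s m = M" using fr by blast
    then show ?thesis by (metis SUP_upper atLeast_iff)
  qed
  have le: "(SUP m\<in>{n0..}. enat (s m)) \<le> enat M"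
    by (rule SUP_least) (use n0 in auto)
  have "(INF n. SUP m\<in>{n..}. enat (s m)) = enat M"
  proof (rule antisym)
    show "(INF n. SUP m\<in>{n..}. enat (s m)) \<le> enat M"
    proof -
      have "(INF n. SUP m\<in>{n..}. enat (s m)) \<le> (SUP m\<in>{n0..}. enat (s m))"
        by (rule INF_lower) simp
      then show ?thesis using le by (rule order_trans)
    qed
    show "enat M \<le> (INF n. SUP m\<in>{n..}. enat (s m))"
      by (rule INF_greatest) (rule ge)
  qed
  then show ?thesis by (simp add: limsup_INF_SUP)
qed

lemma lim_is_parity: "lim_is s M \<Longrightarrow> parity_acc s \<longleftrightarrow> even M"
  unfolding parity_acc_def by (simp add: lim_is_limsup)

lemma lim_is_ex:
  assumes "\<forall>n. s n \<le> B" shows "\<exists>M. lim_is s M"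
proof -
  define V where "V = {v. \<forall>n. \<exists>m\<ge>n. s m = v}"
  have Vsub: "V \<subseteq> {..B}"
  proof
    fix v assume "v \<in> V"
    then obtain m where "s m = v" unfolding V_def by blast
    then show "v \<in> {..B}" using assms by auto
  qed
  have nf: "\<exists>n. \<forall>m\<ge>n. s m \<noteq> v" if "v \<notin> V" for v
    using that unfolding V_def by auto
  obtain f where f: "\<And>v. v \<notin> V \<Longrightarrow> \<forall>m\<ge>f v. s m \<noteq> v"
    using nf by metis
  define n1 where "n1 = Max (f ` ({..B} - V))"
  have n1: "\<forall>m\<ge>n1. s m \<in> V"
  proof (intro allI impI)
    fix m assume "m \<ge> n1"
    show "s m \<in> V"
    proof (rule ccontr)
      assume "s m \<notin> V"
      have "s m \<in> {..B} - V" using assms \<open>s m \<notin> V\<close> by auto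
      then have "f (s m) \<le> n1" unfolding n1_def by auto
      then have "f (s m) \<le> m" using \<open>m \<ge> n1\<close> by linarith
      then show False using f[OF \<open>s m \<notin> V\<close>] by blast
    qed
  qed
  have Vne: "V \<noteq> {}" using n1 by blast
  have Vfin: "finite V" using Vsub finite_subset by blast
  define M where "M = Max V"
  have "M \<in> V" unfolding M_def using Vne Vfin by simp
  moreover have "\<forall>n\<ge>n1. s n \<le> M" using n1 Vfin unfolding M_def by auto
  ultimately show ?thesis unfolding lim_is_def V_def by blast
qed

lemma lim_is_shift:
  assumes "lim_is s' M" "\<forall>n\<ge>b. s n = s' (n - P)"
  shows "lim_is s M"
proof -
  obtain n0 where n0: "\<forall>n\<ge>n0. s' n \<le> M" and fr: "\<forall>n. \<exists>m\<ge>n. s' m = M"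
    using assms(1) unfolding lim_is_def by blast
  have "\<forall>n\<ge>n0 + P + b. s n \<le> M" using n0 assms(2) by auto
  moreover have "\<exists>m\<ge>n. s m = M" for n
  proof -
    obtain m where "m \<ge> n + b" "s' m = M" using fr by blast
    then show ?thesis using assms(2)[rule_format, of "m + P"] by (intro exI[of _ "m+P"]) auto
  qed
  ultimately show ?thesis unfolding lim_is_def by blast
qed

lemma periodic_red:
  fixes n :: nat
  assumes "P > 0" "\<forall>n\<ge>a. s (n + P) = s n"
  shows "n \<ge> a \<Longrightarrow> s n = s (a + (n - a) mod P)"
proof (induction n rule: less_induct)
  case (less n)
  show ?case
  proof (cases "n < a + P")
    case True then show ?thesis using less.prems by simp
  next
    case False
    define n' where "n' = n - P"
    have n'a: "n' \<ge> a" and nn: "n = n' + P" using False unfolding n'_def by auto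
    have "s n = s n'" using assms(2) n'a nn by simp
    also have "\<dots> = s (a + (n' - a) mod P)"
      using less.IH[of n'] n'a nn assms(1) by simp
    also have "(n' - a) mod P = (n - a) mod P"
    proof -
      have "n - a = (n' - a) + P" using n'a nn by simp
      then show ?thesis by simp
    qed
    finally show ?thesis .
  qed
qed

lemma lim_is_periodic:
  assumes "P > 0" "\<forall>n\<ge>a. s (n + P) = s n"
  shows "lim_is s (Max (s ` {a..<a+P}))"
proof -
  define M where "M = Max (s ` {a..<a+P})"
  have fin: "finite (s ` {a..<a+P})" by simp
  have ne: "s ` {a..<a+P} \<noteq> {}" using assms(1) by auto
  have "\<forall>n\<ge>a. s n \<le> M"
  proof (intro allI impI)
    fix n assume "n \<ge> a"
    then have "s n = s (a + (n - a) mod P)" using periodic_red[OF assms] by blast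
    moreover have "a + (n - a) mod P \<in> {a..<a+P}" using assms(1) by simp
    ultimately show "s n \<le> M" unfolding M_def using fin by (metis Max_ge image_eqI)
  qed
  moreover have "\<exists>m\<ge>n. s m = M" for n
  proof -
    obtain q where q: "q \<in> {a..<a+P}" "s q = M" unfolding M_def using Max_in[OF fin ne] by auto
    have "s (q + k * P) = s q" for k
    proof (induction k)
      case (Suc k)
      have "s (q + Suc k * P) = s (q + k * P + P)" by (simp add: algebra_simps)
      also have "\<dots> = s (q + k*P)" using assms(2) q(1) by simp
      finally show ?case using Suc by simp
    qed simp
    moreover have "q + n * P \<ge> n" using assms(1) by (simp add: trans_le_add2)
    ultimately show ?thesis using q by metis
  qed
  ultimately show ?thesis unfolding lim_is_def M_def by blast
qed

definition jsel :: "nat set \<Rightarrow> (nat \<Rightarrow> nat) \<Rightarrow> nat \<Rightarrow> nat \<Rightarrow> nat" where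
  "jsel J r L p = Max (insert (p div 2) {h \<in> reg_indices J. even L \<and> r h < L})"

fun cfg :: "nat set \<Rightarrow> nat set \<Rightarrow> nat \<Rightarrow> (nat \<Rightarrow> nat) \<Rightarrow> (nat \<Rightarrow> nat) \<Rightarrow> nat
    \<Rightarrow> (nat \<Rightarrow> nat) \<times> (nat \<times> nat \<Rightarrow> nat)" where
  "cfg I J N Ls ps 0 = ((\<lambda>_. Min I), (\<lambda>_. 0))"
| "cfg I J N Ls ps (Suc n) =
     (let (r, c) = cfg I J N Ls ps n;
          (w, l, c1) = reg_output J N r c (jsel J r (Ls n) (ps n))
      in reg_update (jsel J r (Ls n) (ps n)) (chosen_prio (Ls n) (Ls n)) r c1)"

lemma index_finite: "index I \<Longrightarrow> finite I"
  unfolding index_def by auto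

lemma index_ne: "index I \<Longrightarrow> I \<noteq> {}"
  unfolding index_def by auto

lemma reg_indices_finite: "index J \<Longrightarrow> finite (reg_indices J)"
proof -
  assume "index J"
  then obtain a b where J: "J = {a..b}" unfolding index_def by auto
  have "reg_indices J \<subseteq> {..b}" unfolding reg_indices_def J by auto
  then show ?thesis using finite_subset by blast
qed

lemma pdiv_in_reg:
  assumes "index J" "Min J \<in> {1,2}" "p \<in> J"
  shows "p div 2 \<in> reg_indices J"
proof -
  obtain a b where J: "J = {a..b}" "a \<le> b" using assms(1) unfolding index_def by auto
  then have "Min J = a" by (intro Min_eqI) auto
  then have a: "a \<le> 2" "1 \<le> a" using assms(2) by auto
  show ?thesis
  proof (cases "p = 1")
    case True then show ?thesis using assms(3) unfolding reg_indices_def by simp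
  next
    case False
    then have "p \<ge> 2" using assms(3) a J by auto
    moreover have "2 * (p div 2) \<le> p" by simp
    moreover have "2 \<le> 2 * (p div 2)" using \<open>p \<ge> 2\<close> by presburger
    ultimately have "2 * (p div 2) \<in> J" using assms(3) a J by auto
    then show ?thesis unfolding reg_indices_def by simp
  qed
qed

lemma reg_update_fst: "fst (reg_update j i r c) = (\<lambda>j'. if j' = j then i else if j < j' then max i (r j') else r j')"
  unfolding reg_update_def by simp

lemma reg_update_snd: "snd (reg_update j i r c) (i', j') =
   (if (j' = j \<and> i' < i) \<or> (i' = r j \<and> j' < j) then 0 else c (i', j'))"
  unfolding reg_update_def by simp

locale gm =
  fixes I J :: "nat set" and N K :: nat and Ls ps :: "nat \<Rightarrow> nat"
    and \<pi> :: "nat \<Rightarrow> 'x" and S :: "'x set"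
  assumes I: "index I" and J: "index J" and minJ: "Min J \<in> {1,2}"
    and Ls: "\<And>n. Ls n \<in> I" and ps: "\<And>n. ps n \<in> J"
    and pacc: "parity_acc ps"
    and S: "finite S" "card S \<le> K" "\<And>n. \<pi> n \<in> S" and NK: "N = K + 1"
    and P: "\<And>a b. a < b \<Longrightarrow> \<pi> a = \<pi> b \<Longrightarrow> (\<forall>n\<in>{a..<b}. ps n \<le> ps a) \<Longrightarrow> even (ps a)
              \<Longrightarrow> even (Max (Ls ` {a..<b}))"
begin

definition r where "r n = fst (cfg I J N Ls ps n)"
definition c where "c n = snd (cfg I J N Ls ps n)"
definition jn where "jn n = jsel J (r n) (Ls n) (ps n)"
definition c1 where "c1 n = snd (snd (reg_output J N (r n) (c n) (jn n)))"
definition w where "w n = fst (reg_output J N (r n) (c n) (jn n))"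
definition amax where "amax a n = Max (Ls ` {a..<n})"

abbreviation "R \<equiv> reg_indices J"

lemma cfg_Suc: "cfg I J N Ls ps (Suc n) = reg_update (jn n) (Ls n) (r n) (c1 n)"
  unfolding jn_def c1_def r_def c_def chosen_prio_def
  by (simp add: split_beta Let_def chosen_prio_def)

lemma r0: "r 0 = (\<lambda>_. Min I)" unfolding r_def by simp
lemma c0: "c 0 = (\<lambda>_. 0)" unfolding c_def by simp

lemma r_Suc: "r (Suc n) h = (if h = jn n then Ls n else if jn n < h then max (Ls n) (r n h) else r n h)"
  unfolding r_def[of "Suc n"] cfg_Suc reg_update_fst by (simp add: r_def)

lemma c_Suc: "c (Suc n) (i', j') =
   (if (j' = jn n \<and> i' < Ls n) \<or> (i' = r n (jn n) \<and> j' < jn n) then 0 else c1 n (i', j'))"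
  unfolding c_def[of "Suc n"] cfg_Suc reg_update_snd by simp

lemma Rfin: "finite R" using reg_indices_finite[OF J] .

lemma jn_R: "jn n \<in> R"
proof -
  have "jn n \<in> insert (ps n div 2) {h \<in> R. even (Ls n) \<and> r n h < Ls n}"
    unfolding jn_def jsel_def by (rule Max_in) (use Rfin in auto)
  then show ?thesis using pdiv_in_reg[OF J minJ ps] by auto
qed

lemma jn_ge: "ps n div 2 \<le> jn n"
  unfolding jn_def jsel_def by (rule Max_ge) (use Rfin in auto)

lemma jn_bump: "h \<in> R \<Longrightarrow> even (Ls n) \<Longrightarrow> r n h < Ls n \<Longrightarrow> h \<le> jn n"
  unfolding jn_def jsel_def by (rule Max_ge) (use Rfin in auto)

lemma jn_cases: "jn n = ps n div 2 \<or> (even (Ls n) \<and> r n (jn n) < Ls n)"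
proof -
  have "jn n \<in> insert (ps n div 2) {h \<in> R. even (Ls n) \<and> r n h < Ls n}"
    unfolding jn_def jsel_def by (rule Max_in) (use Rfin in auto)
  then show ?thesis by auto
qed

lemma r_in: "r n h \<in> I"
proof (induction n)
  case 0 then show ?case using r0 I index_finite index_ne by auto
next
  case (Suc n) then show ?case using Ls by (auto simp: r_Suc max_def)
qed

lemma c1_other: "(o', j) \<noteq> (r n (jn n), jn n) \<Longrightarrow> c1 n (o', j) = c n (o', j)"
  unfolding c1_def reg_output_def by auto

lemma c_lower: "jn n < j \<Longrightarrow> c (Suc n) (o', j) = c n (o', j)"
  using c1_other[of o' j n] by (auto simp: c_Suc)

lemma c1_hit: "jn n \<noteq> 0 \<Longrightarrow> odd (r n (jn n)) \<Longrightarrow> c n (r n (jn n), jn n) \<noteq> N \<Longrightarrow>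
   c1 n (r n (jn n), jn n) = Suc (c n (r n (jn n), jn n))"
  unfolding c1_def reg_output_def by auto

lemma c1_bad: "jn n \<noteq> 0 \<Longrightarrow> odd (r n (jn n)) \<Longrightarrow> c n (r n (jn n), jn n) = N \<Longrightarrow>
   c1 n (r n (jn n), jn n) = 0"
  unfolding c1_def reg_output_def by auto

lemma c1_even: "even (r n (jn n)) \<Longrightarrow> c1 n = c n"
  unfolding c1_def reg_output_def by auto

lemma w_def2: "w n = (if jn n = 0 then 1 else if even (r n (jn n)) then 2 * jn n
    else if c n (r n (jn n), jn n) = N then 2 * jn n + 1 else 2 * jn n)"
  unfolding w_def reg_output_def by auto

lemma w_le: "w n \<le> 2 * jn n + 1"
  unfolding w_def2 by auto

end

context gm begin

lemma amax_Suc: "a < n \<Longrightarrow> amax a (Suc n) = max (amax a n) (Ls n)"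
proof -
  assume "a < n"
  have "{a..<Suc n} = insert n {a..<n}" using \<open>a < n\<close> by auto
  then show ?thesis unfolding amax_def using \<open>a < n\<close> by (simp add: max.commute)
qed

lemma amax_one: "amax n (Suc n) = Ls n"
  unfolding amax_def by simp

lemma amax_ge: "a \<le> m \<Longrightarrow> m < n \<Longrightarrow> Ls m \<le> amax a n"
  unfolding amax_def by (rule Max_ge) auto

lemma card_bound:
  assumes "finite H" "H \<subseteq> {T0..}" "\<forall>a\<in>H. ps a = 2*j" "\<forall>n\<ge>T0. ps n \<le> 2*j"
    "\<forall>a\<in>H. \<forall>b\<in>H. a<b \<longrightarrow> odd (amax a b)"
  shows "card H \<le> K"
proof (rule ccontr)
  assume "\<not> card H \<le> K"
  then have "card S < card H" using S(2) by linarith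
  moreover have "card (\<pi> ` H) \<le> card S" using S(1,3) by (intro card_mono) auto
  ultimately have "\<not> inj_on \<pi> H" using card_image by fastforce
  then obtain a b where ab: "a \<in> H" "b \<in> H" "a \<noteq> b" "\<pi> a = \<pi> b" unfolding inj_on_def by blast
  have key: False if "a \<in> H" "b \<in> H" "a < b" "\<pi> a = \<pi> b" for a b
  proof -
    have "\<forall>n\<in>{a..<b}. ps n \<le> ps a" using assms(2,3,4) that by auto
    moreover have "even (ps a)" using assms(3) that by auto
    ultimately have "even (Max (Ls ` {a..<b}))" using P that by blast
    then show False using assms(5) that unfolding amax_def by auto
  qed
  show False
  proof (cases "a < b")
    case True then show ?thesis using key ab by blast
  next
    case False then have "b < a" using ab by auto
    then show ?thesis using key ab by metis
  qed
qed

lemma mx: "(X::nat) \<le> o' \<or> odd X \<Longrightarrow> L \<le> o' \<Longrightarrow> max X L \<le> o' \<or> odd (max X L)"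
  by (auto simp: max_def)

lemma inv:
  assumes jR: "j \<in> R" and j1: "j \<ge> 1" and oo: "odd o'" and c0: "c T0 (o', j) = 0"
    and win: "\<forall>n\<ge>T0. jn n \<le> j \<and> ps n \<le> 2*j"
  shows "n \<ge> T0 \<Longrightarrow> \<exists>H. H \<subseteq> {T0..<n} \<and> card H = c n (o', j) \<and>
     (\<forall>a\<in>H. ps a = 2*j \<and> r n j \<le> amax a n \<and> (amax a n \<le> o' \<or> odd (amax a n))) \<and>
     (\<forall>a\<in>H. \<forall>b\<in>H. a<b \<longrightarrow> odd (amax a b))"
proof (induction n rule: dec_induct)
  case base
  show ?case using c0 by (intro exI[of _ "{}"]) auto
next
  case (step n)
  then obtain H where H: "H \<subseteq> {T0..<n}" "card H = c n (o', j)"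
    "\<forall>a\<in>H. ps a = 2*j \<and> r n j \<le> amax a n \<and> (amax a n \<le> o' \<or> odd (amax a n))"
    "\<forall>a\<in>H. \<forall>b\<in>H. a<b \<longrightarrow> odd (amax a b)" by blast
  have finH: "finite H" using H(1) finite_subset by blast
  have Hlt: "\<And>a. a \<in> H \<Longrightarrow> a < n" "\<And>a. a \<in> H \<Longrightarrow> T0 \<le> a" using H(1) by auto
  define L where "L = Ls n"
  have jle: "jn n \<le> j" and pse: "ps n \<le> 2*j" using win step(1) by auto
  show ?case
  proof (cases "jn n < j")
    case True
    have cS: "c (Suc n) (o', j) = c n (o', j)" using c_lower[OF True] .
    have rS: "r (Suc n) j = max L (r n j)" using True by (simp add: r_Suc L_def)
    have Lr: "L \<le> r n j" if "even L" "L > o'" "H \<noteq> {}"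
    proof (rule ccontr)
      assume "\<not> L \<le> r n j"
      then have "j \<le> jn n" using jn_bump[OF jR] that L_def by auto
      then show False using True by simp
    qed
    show ?thesis
    proof (intro exI[of _ H] conjI)
      show "H \<subseteq> {T0..<Suc n}" using H(1) by auto
      show "card H = c (Suc n) (o', j)" using H(2) cS by simp
      show "\<forall>a\<in>H. \<forall>b\<in>H. a<b \<longrightarrow> odd (amax a b)" using H(4) .
      show "\<forall>a\<in>H. ps a = 2*j \<and> r (Suc n) j \<le> amax a (Suc n) \<and>
          (amax a (Suc n) \<le> o' \<or> odd (amax a (Suc n)))"
      proof
        fix a assume a: "a \<in> H"
        have am: "amax a (Suc n) = max (amax a n) L" using amax_Suc[OF Hlt(1)[OF a]] L_def by simp
        have 1: "r (Suc n) j \<le> amax a (Suc n)" using H(3) a am rS by auto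
        have 2: "amax a (Suc n) \<le> o' \<or> odd (amax a (Suc n))"
        proof (cases "L \<le> o'")
          case True then show ?thesis using mx H(3) a am by auto
        next
          case False
          show ?thesis
          proof (cases "even L")
            case True
            then have "L \<le> amax a n" using Lr False a H(3) by fastforce
            then show ?thesis using am H(3) a by (auto simp: max_def)
          next
            case False
            then show ?thesis using am H(3) a by (auto simp: max_def)
          qed
        qed
        show "ps a = 2*j \<and> r (Suc n) j \<le> amax a (Suc n) \<and>
          (amax a (Suc n) \<le> o' \<or> odd (amax a (Suc n)))" using 1 2 H(3) a by auto
      qed
    qed
  next
    case False
    then have jj: "jn n = j" using jle by simp
    have rS: "r (Suc n) j = L" using jj by (simp add: r_Suc L_def)
    show ?thesis
    proof (cases "o' < L")
      case True
      then have "c (Suc n) (o', j) = 0" using jj by (simp add: c_Suc L_def)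
      then show ?thesis by (intro exI[of _ "{}"]) auto
    next
      case False
      then have Lo: "L \<le> o'" by simp
      have cS: "c (Suc n) (o', j) = c1 n (o', j)" using jj False by (simp add: c_Suc L_def)
      have old: "ps a = 2*j \<and> r (Suc n) j \<le> amax a (Suc n) \<and>
          (amax a (Suc n) \<le> o' \<or> odd (amax a (Suc n)))" if a: "a \<in> H" for a
      proof -
        have am: "amax a (Suc n) = max (amax a n) L" using amax_Suc[OF Hlt(1)[OF a]] L_def by simp
        show ?thesis using mx[of "amax a n" o' L] H(3) a am rS Lo by auto
      qed
      show ?thesis
      proof (cases "r n j = o'")
        case True
        have "card H \<le> K"
          by (rule card_bound[OF finH _ _ _ H(4), of T0 j]) (use H(1,3) win in auto)
        then have cN: "c n (o', j) \<noteq> N" using H(2) NK by simp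
        have "c1 n (o', j) = Suc (c n (o', j))"
          using c1_hit[of n] jj True oo j1 cN by auto
        then have cS2: "c (Suc n) (o', j) = Suc (card H)" using cS H(2) by simp
        have psn: "ps n = 2*j"
        proof -
          have "\<not> (even (Ls n) \<and> r n (jn n) < Ls n)" using jj True Lo L_def by auto
          then have "jn n = ps n div 2" using jn_cases by blast
          then show ?thesis using pse jj by linarith
        qed
        have nH: "n \<notin> H" using Hlt by blast
        show ?thesis
        proof (intro exI[of _ "insert n H"] conjI)
          show "insert n H \<subseteq> {T0..<Suc n}" using H(1) step(1) by auto
          show "card (insert n H) = c (Suc n) (o', j)" using cS2 nH finH by simp
          show "\<forall>a\<in>insert n H. ps a = 2*j \<and> r (Suc n) j \<le> amax a (Suc n) \<and>
            (amax a (Suc n) \<le> o' \<or> odd (amax a (Suc n)))"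
            using old psn rS amax_one Lo L_def by auto
          show "\<forall>a\<in>insert n H. \<forall>b\<in>insert n H. a<b \<longrightarrow> odd (amax a b)"
          proof (intro ballI impI)
            fix a b assume a: "a \<in> insert n H" and b: "b \<in> insert n H" and ab: "a < b"
            show "odd (amax a b)"
            proof (cases "b = n")
              case True
              then have aH: "a \<in> H" using a ab by auto
              have "o' \<le> amax a n" using H(3) aH \<open>r n j = o'\<close> by auto
              then show ?thesis using H(3) aH True oo by (metis le_antisym)
            next
              case False
              then have "b \<in> H" using b by auto
              moreover have "a \<in> H" using a ab Hlt(1)[OF \<open>b \<in> H\<close>] by auto
              ultimately show ?thesis using H(4) ab by blast
            qed
          qed
        qed
      next
        case False
        then have "c1 n (o', j) = c n (o', j)" using c1_other[of o' j n] jj by auto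
        then show ?thesis using old H cS by (intro exI[of _ H]) auto
      qed
    qed
  qed
qed

lemma counter_bound:
  assumes jR: "j \<in> R" and j1: "j \<ge> 1" and oo: "odd o'" and c0: "c T0 (o', j) = 0"
    and win: "\<forall>n\<ge>T0. jn n \<le> j \<and> ps n \<le> 2*j" and n: "n \<ge> T0"
  shows "c n (o', j) \<le> K"
proof -
  obtain H where H: "H \<subseteq> {T0..<n}" "card H = c n (o', j)"
     "\<forall>a\<in>H. ps a = 2*j" "\<forall>a\<in>H. \<forall>b\<in>H. a<b \<longrightarrow> odd (amax a b)"
    using inv[OF assms] by blast
  have "card H \<le> K"
    by (rule card_bound[OF _ _ H(3) _ H(4), of T0]) (use H(1) win finite_subset in auto)
  then show ?thesis using H(2) by simp
qed

end

context gm begin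

lemma no_loss: "\<not> fst (snd (reg_output J N (r n) (c n) (jn n)))"
proof
  assume loss: "fst (snd (reg_output J N (r n) (c n) (jn n)))"
  define j where "j = jn n"
  have j0: "j \<noteq> 0" and oj: "odd (r n j)" and cN: "c n (r n j, j) = N" and nJ: "2*j+1 \<notin> J"
    using loss unfolding reg_output_def j_def by (auto split: if_splits)
  obtain a b where Jab: "J = {a..b}" using J unfolding index_def by auto
  have jR: "j \<in> R" unfolding j_def using jn_R .
  then have "2*j \<in> J" using j0 unfolding reg_indices_def by auto
  then have b: "b = 2*j" using nJ Jab by auto
  have win: "\<forall>m\<ge>0. jn m \<le> j \<and> ps m \<le> 2*j"
  proof (intro allI impI conjI)
    fix m :: nat
    have "jn m \<in> R" using jn_R .
    then show "jn m \<le> j" unfolding reg_indices_def using Jab b by auto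
    show "ps m \<le> 2*j" using ps[of m] Jab b by auto
  qed
  have "c n (r n j, j) \<le> K"
    by (rule counter_bound[OF jR _ oj _ win]) (use j0 c0 in auto)
  then show False using cN NK by simp
qed

lemma mono_from:
  fixes \<Phi> :: "nat \<Rightarrow> nat"
  assumes "\<forall>n\<ge>n0. \<Phi> n \<le> \<Phi> (Suc n)"
  shows "n0 \<le> n \<Longrightarrow> n \<le> n' \<Longrightarrow> \<Phi> n \<le> \<Phi> n'"
proof -
  assume "n0 \<le> n" "n \<le> n'"
  from \<open>n \<le> n'\<close> show ?thesis
  proof (induction n' rule: dec_induct)
    case (step m) then show ?case using assms \<open>n0 \<le> n\<close> by (meson le_trans)
  qed simp
qed

lemma eventually_const:
  fixes \<Phi> :: "nat \<Rightarrow> nat" and D :: "nat \<Rightarrow> bool"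
  assumes mono: "\<forall>n\<ge>n0. \<Phi> n \<le> \<Phi> (Suc n)" and strict: "\<forall>n\<ge>n0. D n \<longrightarrow> \<Phi> n < \<Phi> (Suc n)"
    and bnd: "\<forall>n. \<Phi> n \<le> B"
  shows "\<exists>T\<ge>n0. \<forall>n\<ge>T. \<not> D n"
proof (rule ccontr)
  assume "\<not> ?thesis"
  then have inf: "\<forall>T\<ge>n0. \<exists>n\<ge>T. D n" by blast
  have "\<exists>n\<ge>n0. \<Phi> n \<ge> m" for m
  proof (induction m)
    case 0 then show ?case by auto
  next
    case (Suc m)
    then obtain n where n: "n \<ge> n0" "\<Phi> n \<ge> m" by blast
    obtain n' where n': "n' \<ge> n" "D n'" using inf n(1) by blast
    have "\<Phi> n \<le> \<Phi> n'" using mono_from[OF mono n(1) n'(1)] .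
    moreover have "\<Phi> n' < \<Phi> (Suc n')" using strict n n' by auto
    ultimately show ?case using n n' by (intro exI[of _ "Suc n'"]) auto
  qed
  then obtain n where "\<Phi> n \<ge> Suc B" by blast
  then show False using bnd[rule_format, of n] by simp
qed

lemma at_most_one_finite: "(\<forall>x\<in>X. \<forall>y\<in>X. x = y) \<Longrightarrow> finite X"
proof -
  assume h: "\<forall>x\<in>X. \<forall>y\<in>X. x = y"
  show "finite X"
  proof (cases "X = {}")
    case False
    then obtain x where "x \<in> X" by blast
    then have "X \<subseteq> {x}" using h by blast
    then show ?thesis using finite_subset by blast
  qed simp
qed

lemma parity_w: "parity_acc w"
proof -
  obtain a b where Jab: "J = {a..b}" using J unfolding index_def by auto
  have "\<forall>n. ps n \<le> b" using ps Jab by auto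
  then obtain M where M: "lim_is ps M" using lim_is_ex by blast
  have eM: "even M" using lim_is_parity[OF M] pacc by simp
  obtain n0 where n0: "\<forall>n\<ge>n0. ps n \<le> M" and frM: "\<forall>n. \<exists>m\<ge>n. ps m = M"
    using M unfolding lim_is_def by blast
  have MJ: "M \<in> J" using frM ps by metis
  obtain aa bb where "J = {aa..bb}" "aa \<le> bb" using J unfolding index_def by auto
  then have "Min J = aa" by (intro Min_eqI) auto
  then have "M \<ge> 1" using MJ minJ \<open>J = {aa..bb}\<close> by auto
  then have M2: "M \<ge> 2" using eM by presburger
  define k where "k = M div 2"
  have Mk: "M = 2*k" using eM unfolding k_def by simp
  have k1: "k \<ge> 1" using M2 Mk by simp
  have kR: "k \<in> R" using MJ Mk unfolding reg_indices_def by simp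
  define Hs where "Hs = {h \<in> R. k < h}"
  have finHs: "finite Hs" using Rfin unfolding Hs_def by simp
  define \<Phi> where "\<Phi> n = (\<Sum>h\<in>Hs. r n h)" for n
  have rmono: "r n h \<le> r (Suc n) h" if "n \<ge> n0" "h \<in> Hs" for n h
  proof (cases "h = jn n")
    case True
    then have "jn n > k" using that unfolding Hs_def by auto
    moreover have "ps n div 2 \<le> k" using n0 that(1) Mk by auto
    ultimately have "jn n \<noteq> ps n div 2" by auto
    then have "r n (jn n) < Ls n" using jn_cases by blast
    then show ?thesis using True by (simp add: r_Suc)
  next
    case False then show ?thesis by (simp add: r_Suc)
  qed
  have mono: "\<forall>n\<ge>n0. \<Phi> n \<le> \<Phi> (Suc n)"
    unfolding \<Phi>_def using rmono by (auto intro: sum_mono)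
  have strict: "\<forall>n\<ge>n0. k < jn n \<longrightarrow> \<Phi> n < \<Phi> (Suc n)"
  proof (intro allI impI)
    fix n assume n: "n \<ge> n0" "k < jn n"
    have jH: "jn n \<in> Hs" using n jn_R unfolding Hs_def by auto
    have "jn n \<noteq> ps n div 2" using n n0 Mk by fastforce
    then have "r n (jn n) < Ls n" using jn_cases by blast
    then have "r n (jn n) < r (Suc n) (jn n)" by (simp add: r_Suc)
    then show "\<Phi> n < \<Phi> (Suc n)" unfolding \<Phi>_def
      using rmono n(1) jH finHs by (intro sum_strict_mono_ex1) auto
  qed
  have bnd: "\<forall>n. \<Phi> n \<le> card Hs * Max I"
  proof
    fix n
    have "\<Phi> n \<le> (\<Sum>h\<in>Hs. Max I)" unfolding \<Phi>_def
      using r_in I index_finite by (intro sum_mono) auto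
    then show "\<Phi> n \<le> card Hs * Max I" by simp
  qed
  obtain T where T: "T \<ge> n0" "\<forall>n\<ge>T. \<not> k < jn n"
    using eventually_const[OF mono strict bnd] by blast
  have win: "\<forall>n\<ge>T. jn n \<le> k \<and> ps n \<le> 2*k" using T n0 Mk by auto
  define bad where "bad o' n \<longleftrightarrow> jn n = k \<and> r n k = o' \<and> odd o' \<and> c n (o', k) = N" for o' n
  have one: False if "T \<le> n1" "n1 < n2" "bad o' n1" "bad o' n2" for o' n1 n2
  proof -
    have "c1 n1 (o', k) = 0" using c1_bad[of n1] that(3) k1 unfolding bad_def by auto
    then have cz: "c (Suc n1) (o', k) = 0" using c_Suc[of n1 o' k] by auto
    have win': "\<forall>n\<ge>Suc n1. jn n \<le> k \<and> ps n \<le> 2*k" using win that(1) by auto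
    have "c n2 (o', k) \<le> K"
      by (rule counter_bound[OF kR k1 _ cz win']) (use that in \<open>auto simp: bad_def\<close>)
    then show False using that(4) NK unfolding bad_def by simp
  qed
  have badfin: "finite {n. n \<ge> T \<and> bad o' n}" for o'
  proof (rule at_most_one_finite, intro ballI)
    fix x y assume x: "x \<in> {n. n \<ge> T \<and> bad o' n}" and y: "y \<in> {n. n \<ge> T \<and> bad o' n}"
    show "x = y"
    proof (rule ccontr)
      assume "x \<noteq> y"
      then show False using one[of x y o'] one[of y x o'] x y by (cases "x < y") auto
    qed
  qed
  have wsub: "{n. n \<ge> T \<and> w n = 2*k+1} \<subseteq> (\<Union>o'\<in>I. {n. n \<ge> T \<and> bad o' n})"
  proof
    fix n assume n: "n \<in> {n. n \<ge> T \<and> w n = 2*k+1}"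
    then have "jn n \<le> k" using win by auto
    then have "bad (r n k) n" using n k1 unfolding w_def2 bad_def by (auto split: if_splits; presburger)
    then show "n \<in> (\<Union>o'\<in>I. {n. n \<ge> T \<and> bad o' n})" using n r_in by auto
  qed
  have "finite {n. n \<ge> T \<and> w n = 2*k+1}"
    by (rule finite_subset[OF wsub]) (use I index_finite badfin in auto)
  then obtain T2 where T2: "{n. n \<ge> T \<and> w n = 2*k+1} \<subseteq> {..<T2}"
    using finite_nat_bounded by blast
  define T3 where "T3 = max T T2"
  have nb: "w n \<noteq> 2*k+1" if "n \<ge> T3" for n using T2 that unfolding T3_def by auto
  have p1: "\<forall>n\<ge>T3. w n \<le> 2*k"
  proof (intro allI impI)
    fix n assume "n \<ge> T3"
    then have "w n \<le> 2 * jn n + 1" "jn n \<le> k" "w n \<noteq> 2*k+1"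
      using w_le win nb unfolding T3_def by auto
    then show "w n \<le> 2*k" by linarith
  qed
  have p2: "\<exists>m\<ge>n. w m = 2*k" for n
  proof -
    obtain m where m: "m \<ge> max n T3" "ps m = M" using frM by blast
    then have "jn m = k" using jn_ge[of m] win Mk unfolding T3_def by fastforce
    then have "w m = 2*k" using nb[of m] m k1 unfolding w_def2 by (auto split: if_splits)
    then show "\<exists>m\<ge>n. w m = 2*k" using m by auto
  qed
  have "lim_is w (2*k)" unfolding lim_is_def using p1 p2 by blast
  then show ?thesis using lim_is_parity by simp
qed

end

function fold_at :: "bool list \<Rightarrow> bool list \<Rightarrow> bool list \<Rightarrow> bool list" where
  "fold_at u v x = (if length u < length v \<and> take (length v) x = v
      then fold_at u v (u @ drop (length v) x) else x)"
  by auto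
termination
proof (relation "measure (\<lambda>(u, v, x). length x)")
  fix u v x :: "bool list"
  assume h: "length u < length v \<and> take (length v) x = v"
  then have "length v \<le> length x" by (metis length_take min.absorb_iff2 min.commute nat_le_linear)
  then show "((u, v, u @ drop (length v) x), u, v, x) \<in> measure (\<lambda>(u, v, x). length x)"
    using h by auto
qed auto

declare fold_at.simps[simp del]

lemma fold_short: "length x < length v \<Longrightarrow> fold_at u v x = x"
  by (subst fold_at.simps) auto

lemma fold_nopre: "take (length v) x \<noteq> v \<Longrightarrow> fold_at u v x = x"
  by (subst fold_at.simps) auto

lemma fold_pre: "length u < length v \<Longrightarrow> take (length v) x = v \<Longrightarrow>
   fold_at u v x = fold_at u v (u @ drop (length v) x)"
  by (subst fold_at.simps) auto

lemma take_eq_len: "take k x = v \<Longrightarrow> length v = k \<Longrightarrow> k \<le> length x"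
  by auto

lemma fold_snoc:
  "length u < length v \<Longrightarrow> fold_at u v (x @ [d]) =
     (if fold_at u v x @ [d] = v then u else fold_at u v x @ [d])"
proof (induction u v x rule: fold_at.induct)
  case (1 u v x)
  show ?case
  proof (cases "take (length v) x = v")
    case True
    have lx: "length v \<le> length x" using take_eq_len[OF True] by simp
    have t2: "take (length v) (x @ [d]) = v" using True lx by simp
    have dr: "drop (length v) (x @ [d]) = drop (length v) x @ [d]" using lx by simp
    have "fold_at u v (x @ [d]) = fold_at u v ((u @ drop (length v) x) @ [d])"
      using fold_pre[OF "1.prems" t2] dr by simp
    also have "\<dots> = (if fold_at u v (u @ drop (length v) x) @ [d] = v then u
        else fold_at u v (u @ drop (length v) x) @ [d])"
      using "1.IH" "1.prems" True by blast
    also have "fold_at u v (u @ drop (length v) x) = fold_at u v x"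
      using fold_pre[OF "1.prems" True] by simp
    finally show ?thesis .
  next
    case False
    have fx: "fold_at u v x = x" using fold_nopre[OF False] .
    show ?thesis
    proof (cases "take (length v) (x @ [d]) = v")
      case True
      have "length x < length v"
      proof (rule ccontr)
        assume "\<not> length x < length v"
        then have "take (length v) (x @ [d]) = take (length v) x" by simp
        then show False using True False by simp
      qed
      then have "x @ [d] = v" using True by (metis Suc_leI length_append_singleton take_all)
      moreover have "fold_at u v v = u"
        using fold_pre[OF "1.prems", of v] fold_short[of u v u] "1.prems" by simp
      ultimately show ?thesis using fx by simp
    next
      case False
      then have "x @ [d] \<noteq> v" by auto
      then show ?thesis using fold_nopre[OF False] fx by simp
    qed
  qed
qed

lemma fold_nil: "length u < length v \<Longrightarrow> fold_at u v [] = []"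
  by (rule fold_short) auto

lemma map_upt_shift: "map (\<lambda>i. f (i + k)) [a..<c] = map f [a+k..<c+k]"
  by (rule nth_equalityI) (auto simp: algebra_simps)

lemma fold_branch_shift:
  fixes \<gamma> :: "nat \<Rightarrow> bool"
  assumes luv: "length u < length v" and hv: "map \<gamma> [0..<length v] = v"
    and hu: "take (length u) v = u" and n: "n \<ge> length v"
  shows "fold_at u v (map \<gamma> [0..<n]) =
     fold_at u v (map (\<lambda>i. if i < length u then \<gamma> i else \<gamma> (i + (length v - length u))) [0..<n - (length v - length u)])"
    (is "_ = fold_at u v (map ?g1 _)")
proof -
  define a where "a = length u"
  define b where "b = length v"
  define P where "P = b - a"
  have ab: "a < b" using luv unfolding a_def b_def by simp
  have t: "take b (map \<gamma> [0..<n]) = v"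
    using hv n unfolding b_def by (simp add: take_map)
  have d: "drop b (map \<gamma> [0..<n]) = map \<gamma> [b..<n]"
    by (simp add: drop_map)
  have e1: "fold_at u v (map \<gamma> [0..<n]) = fold_at u v (u @ map \<gamma> [b..<n])"
    using fold_pre[OF luv t[unfolded b_def]] d unfolding b_def by simp
  have split: "[0..<n - P] = [0..<a] @ [a..<n - P]"
  proof -
    have "a \<le> n - P" using ab n unfolding P_def b_def by simp
    then have "n - P = a + (n - P - a)" by simp
    then show ?thesis using upt_add_eq_append[of 0 a "n - P - a"] by (metis zero_le)
  qed
  have m1: "map ?g1 [0..<a] = u"
  proof -
    have "map ?g1 [0..<a] = map \<gamma> [0..<a]" unfolding a_def by simp
    also have "\<dots> = take a (map \<gamma> [0..<b])" using ab by (simp add: take_map)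
    also have "\<dots> = u" using hv hu unfolding a_def b_def by simp
    finally show ?thesis .
  qed
  have m2: "map ?g1 [a..<n - P] = map \<gamma> [b..<n]"
  proof -
    have "map ?g1 [a..<n - P] = map (\<lambda>i. \<gamma> (i + P)) [a..<n - P]"
      unfolding a_def b_def P_def by simp
    also have "\<dots> = map \<gamma> [a + P..<n - P + P]" by (rule map_upt_shift)
    also have "a + P = b" "n - P + P = n" using ab n unfolding P_def b_def by auto
    ultimately show ?thesis by simp
  qed
  show ?thesis using e1 split m1 m2 unfolding a_def b_def P_def by simp
qed

lemma gsr_snoc: "guided_state_rev g q0 \<rho> (rev (x @ [d])) =
   child_state d (g (guided_state_rev g q0 \<rho> (rev x)) (\<rho> x))"
  by simp

locale tr =
  fixes \<Sigma> :: "'a set" and A B :: "'a aut" and I J :: "nat set"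
    and g :: "nat \<Rightarrow> 'a trans \<Rightarrow> 'a trans" and t :: "bool list \<Rightarrow> 'a"
    and \<rho>B :: "bool list \<Rightarrow> 'a trans"
  assumes autA: "is_aut \<Sigma> I A" and autB: "is_aut \<Sigma> J B" and gf: "is_guiding_fn A B g"
    and pres: "preserves_acc \<Sigma> A B g" and tt: "is_tree \<Sigma> t" and accB: "accepting_run B t \<rho>B"
begin

definition GS where "GS x = guided_state_rev g (init A) \<rho>B (rev x)"

lemma GS_nil: "GS [] = init A" unfolding GS_def by simp
lemma GS_snoc: "GS (x @ [d]) = child_state d (g (GS x) (\<rho>B x))" unfolding GS_def by simp
lemma rhoA_eq: "guided_run A g \<rho>B x = g (GS x) (\<rho>B x)" unfolding guided_run_def GS_def by simp

lemma runB: "is_run B t \<rho>B" using accB unfolding accepting_run_def by simp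
lemma rhoB_delta: "\<rho>B x \<in> delta B" using runB unfolding is_run_def by simp

lemma child_in: "\<tau> \<in> delta A \<Longrightarrow> child_state d \<tau> \<in> states A"
  using autA unfolding is_aut_def child_state_def by (auto split: prod.splits)

lemma GS_in: "GS x \<in> states A"
proof (induction x rule: rev_induct)
  case Nil then show ?case using autA GS_nil unfolding is_aut_def by simp
next
  case (snoc d x)
  have "g (GS x) (\<rho>B x) \<in> delta A" using gf snoc rhoB_delta unfolding is_guiding_fn_def by blast
  then show ?case using GS_snoc child_in by simp
qed

lemma rhoA_delta: "guided_run A g \<rho>B x \<in> delta A"
  using gf GS_in rhoB_delta rhoA_eq unfolding is_guiding_fn_def by simp

lemma priA: "edge_pri A (guided_run A g \<rho>B x) d \<in> I"
  using autA rhoA_delta unfolding is_aut_def edge_pri_def by auto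

lemma priB: "edge_pri B (\<rho>B x) d \<in> J"
  using autB rhoB_delta unfolding is_aut_def edge_pri_def by auto

lemma stateB: "fst (\<rho>B x) \<in> states B"
proof -
  have "\<rho>B x \<in> states B \<times> \<Sigma> \<times> states B \<times> states B"
    using autB rhoB_delta unfolding is_aut_def by blast
  then show ?thesis by auto
qed

definition pA where "pA \<beta> n = edge_pri A (guided_run A g \<rho>B (map \<beta> [0..<n])) (\<beta> n)"
definition pB where "pB \<beta> n = edge_pri B (\<rho>B (map \<beta> [0..<n])) (\<beta> n)"

lemma pB_acc: "parity_acc (pB \<beta>)"
  using accB unfolding accepting_run_def pB_def by simp

lemma J_bound: "\<exists>M. \<forall>x. x \<in> J \<longrightarrow> x \<le> M"
  using autB unfolding is_aut_def index_def by auto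

end

context tr begin

lemma pump:
  fixes \<beta> :: "nat \<Rightarrow> bool"
  assumes ab: "a < b" and sA: "GS (map \<beta> [0..<a]) = GS (map \<beta> [0..<b])"
    and sB: "fst (\<rho>B (map \<beta> [0..<a])) = fst (\<rho>B (map \<beta> [0..<b]))"
    and le: "\<forall>n\<in>{a..<b}. pB \<beta> n \<le> pB \<beta> a" and ev: "even (pB \<beta> a)"
  shows "even (Max (pA \<beta> ` {a..<b}))"
proof (rule ccontr)
  assume odd: "\<not> even (Max (pA \<beta> ` {a..<b}))"
  define u where "u = map \<beta> [0..<a]"
  define v where "v = map \<beta> [0..<b]"
  have lu: "length u = a" and lv: "length v = b" unfolding u_def v_def by auto
  have luv: "length u < length v" using lu lv ab by simp
  have hu: "take (length u) v = u" unfolding u_def v_def using ab by (simp add: take_map)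
  define f where "f = fold_at u v"
  have fsn: "f (x @ [d]) = (if f x @ [d] = v then u else f x @ [d])" for x d
    unfolding f_def using fold_snoc[OF luv] .
  have fnil: "f [] = []" unfolding f_def using fold_nil[OF luv] .
  define \<rho>' where "\<rho>' = (\<lambda>x. \<rho>B (f x))"
  define t' where "t' = (\<lambda>x. t (f x))"
  have sBu: "fst (\<rho>B u) = fst (\<rho>B v)" using sB unfolding u_def v_def .
  have sAu: "GS u = GS v" using sA unfolding u_def v_def .
  have run': "is_run B t' \<rho>'"
    unfolding is_run_def
  proof (intro conjI allI)
    show "fst (\<rho>' []) = init B" unfolding \<rho>'_def fnil using runB unfolding is_run_def by simp
    fix x
    show "\<rho>' x \<in> delta B" unfolding \<rho>'_def using rhoB_delta .
    show "fst (snd (\<rho>' x)) = t' x" unfolding \<rho>'_def t'_def using runB unfolding is_run_def by simp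
    fix d
    have "fst (\<rho>B (f x @ [d])) = child_state d (\<rho>B (f x))" using runB unfolding is_run_def by simp
    then show "fst (\<rho>' (x @ [d])) = child_state d (\<rho>' x)"
      unfolding \<rho>'_def using fsn[of x d] sBu by (auto split: if_splits)
  qed
  have GS': "guided_state_rev g (init A) \<rho>' (rev x) = GS (f x)" for x
  proof (induction x rule: rev_induct)
    case Nil then show ?case using fnil GS_nil by simp
  next
    case (snoc d x)
    have "guided_state_rev g (init A) \<rho>' (rev (x @ [d])) = child_state d (g (GS (f x)) (\<rho>B (f x)))"
      using snoc unfolding \<rho>'_def by simp
    also have "\<dots> = GS (f x @ [d])" using GS_snoc by simp
    also have "\<dots> = GS (f (x @ [d]))" using fsn[of x d] sAu by auto
    finally show ?case .
  qed
  have gr': "guided_run A g \<rho>' x = guided_run A g \<rho>B (f x)" for x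
    unfolding guided_run_def using GS' GS_def \<rho>'_def by simp
  define P where "P = b - a"
  have P0: "P > 0" using ab unfolding P_def by simp
  define ginf where "ginf i = (if i < a then \<beta> i else \<beta> (a + (i - a) mod P))" for i
  have gsmall: "ginf i = \<beta> i" if "i < b" for i
    using that unfolding ginf_def P_def by auto
  have gv: "map ginf [0..<b] = v" unfolding v_def using gsmall by simp
  have gper: "ginf (i + P) = ginf i" if "i \<ge> a" for i
  proof -
    have "(i + P - a) mod P = (i - a) mod P" using that
      by (metis Nat.add_diff_assoc2 mod_add_self2)
    then show ?thesis unfolding ginf_def using that by auto
  qed
  define sq where "sq Q \<gamma> n = Q (f (map \<gamma> [0..<n])) (\<gamma> n)"
    for Q :: "bool list \<Rightarrow> bool \<Rightarrow> nat" and \<gamma> :: "nat \<Rightarrow> bool" and n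
  define sh where "sh \<gamma> i = (if i < a then \<gamma> i else \<gamma> (i + P))" for \<gamma> :: "nat \<Rightarrow> bool" and i
  have shiftQ: "sq Q \<gamma> n = sq Q (sh \<gamma>) (n - P)" if "map \<gamma> [0..<b] = v" "n \<ge> b" for Q \<gamma> n
  proof -
    have "f (map \<gamma> [0..<n]) = f (map (sh \<gamma>) [0..<n - P])"
      using fold_branch_shift[OF luv, of \<gamma> n] that hu lu lv
      unfolding f_def sh_def P_def by simp
    moreover have "\<gamma> n = sh \<gamma> (n - P)" using that ab unfolding sh_def P_def by auto
    ultimately show ?thesis unfolding sq_def by simp
  qed
  have shinf: "sh ginf = ginf"
  proof
    fix i show "sh ginf i = ginf i" unfolding sh_def using gper by auto
  qed
  have perQ: "sq Q ginf (n + P) = sq Q ginf n" if "n \<ge> a" for Q n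
    using shiftQ[OF gv, of "n + P" Q] shinf that unfolding P_def by simp
  have smallQ: "sq Q ginf n = Q (map \<beta> [0..<n]) (\<beta> n)" if "n < b" for Q n
  proof -
    have m1: "map ginf [0..<n] = map \<beta> [0..<n]" using gsmall that by simp
    have m2: "f (map \<beta> [0..<n]) = map \<beta> [0..<n]"
      unfolding f_def using that lv by (intro fold_short) simp
    have m3: "ginf n = \<beta> n" using gsmall that by simp
    show ?thesis unfolding sq_def m1 m2 m3 ..
  qed
  have limQ: "lim_is (sq Q ginf) (Max ((\<lambda>n. Q (map \<beta> [0..<n]) (\<beta> n)) ` {a..<b}))" for Q
  proof -
    have "lim_is (sq Q ginf) (Max (sq Q ginf ` {a..<a+P}))"
      by (rule lim_is_periodic[OF P0]) (use perQ in auto)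
    moreover have "sq Q ginf ` {a..<a+P} = (\<lambda>n. Q (map \<beta> [0..<n]) (\<beta> n)) ` {a..<b}"
      using smallQ ab unfolding P_def by (intro image_cong) auto
    ultimately show ?thesis by simp
  qed
  define QB where "QB x d = edge_pri B (\<rho>B x) d" for x d
  define QA where "QA x d = edge_pri A (guided_run A g \<rho>B x) d" for x d
  obtain M0 where M0: "\<forall>x. x \<in> J \<longrightarrow> x \<le> M0" using J_bound by blast
  have sqB_bd: "\<forall>n. sq QB \<gamma> n \<le> M0" for \<gamma> using M0 priB unfolding sq_def QB_def by blast
  have ginf_acc: "parity_acc (sq QB ginf)"
  proof -
    have "Max ((\<lambda>n. QB (map \<beta> [0..<n]) (\<beta> n)) ` {a..<b}) = pB \<beta> a"
      using le ab unfolding QB_def pB_def by (intro Max_eqI) auto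
    then show ?thesis using limQ[of QB] lim_is_parity ev by metis
  qed
  have main: "\<forall>\<gamma>. \<gamma> \<noteq> ginf \<longrightarrow> (LEAST i. \<gamma> i \<noteq> ginf i) = m \<longrightarrow> parity_acc (sq QB \<gamma>)" for m
  proof (induction m rule: less_induct)
    case (less m)
    show ?case
    proof (intro allI impI)
      fix \<gamma> :: "nat \<Rightarrow> bool" assume ne: "\<gamma> \<noteq> ginf" and lm: "(LEAST i. \<gamma> i \<noteq> ginf i) = m"
      have ex: "\<exists>i. \<gamma> i \<noteq> ginf i" using ne by auto
      have gm: "\<gamma> m \<noteq> ginf m" using LeastI_ex[OF ex] lm by simp
      show "parity_acc (sq QB \<gamma>)"
      proof (cases "map \<gamma> [0..<b] = v")
        case False
        have "f (map \<gamma> [0..<n]) = map \<gamma> [0..<n]" for n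
        proof (cases "n < b")
          case True then show ?thesis unfolding f_def using lv by (intro fold_short) simp
        next
          case False
          then have "take (length v) (map \<gamma> [0..<n]) = map \<gamma> [0..<b]" using lv by (simp add: take_map)
          then show ?thesis unfolding f_def using \<open>map \<gamma> [0..<b] \<noteq> v\<close> by (intro fold_nopre) simp
        qed
        then have "sq QB \<gamma> = pB \<gamma>" unfolding sq_def QB_def pB_def by auto
        then show ?thesis using pB_acc by simp
      next
        case True
        have mb: "m \<ge> b"
        proof (rule ccontr)
          assume "\<not> m \<ge> b"
          then have "\<gamma> m = v ! m" "ginf m = v ! m" using True gv by (metis add_0 diff_zero not_le nth_map_upt)+
          then show False using gm by simp
        qed
        have "sh \<gamma> (m - P) = \<gamma> m" using mb ab unfolding sh_def P_def by auto
        moreover have "ginf (m - P) = ginf m" using gper[of "m - P"] mb ab unfolding P_def by auto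
        ultimately have d1: "sh \<gamma> (m - P) \<noteq> ginf (m - P)" using gm by simp
        then have ne1: "sh \<gamma> \<noteq> ginf" by auto
        have "(LEAST i. sh \<gamma> i \<noteq> ginf i) \<le> m - P" using d1 by (rule Least_le)
        then have "(LEAST i. sh \<gamma> i \<noteq> ginf i) < m" using P0 mb ab by linarith
        then have acc1: "parity_acc (sq QB (sh \<gamma>))" using less.IH ne1 by blast
        obtain M where M: "lim_is (sq QB (sh \<gamma>)) M" using lim_is_ex sqB_bd by blast
        have "lim_is (sq QB \<gamma>) M"
          by (rule lim_is_shift[OF M, of b _ P]) (use shiftQ[OF True] in auto)
        then show ?thesis using acc1 M lim_is_parity by metis
      qed
    qed
  qed
  have accB': "parity_acc (sq QB \<gamma>)" for \<gamma>
    using main ginf_acc by (cases "\<gamma> = ginf") auto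
  have acc': "accepting_run B t' \<rho>'"
    unfolding accepting_run_def using run' accB' unfolding sq_def QB_def \<rho>'_def by simp
  have tree': "is_tree \<Sigma> t'" using tt unfolding is_tree_def t'_def by simp
  have "accepting_run A t' (guided_run A g \<rho>')"
    using pres tree' acc' unfolding preserves_acc_def by blast
  then have "parity_acc (sq QA ginf)"
    unfolding accepting_run_def sq_def QA_def using gr' by simp
  moreover have "Max ((\<lambda>n. QA (map \<beta> [0..<n]) (\<beta> n)) ` {a..<b}) = Max (pA \<beta> ` {a..<b})"
    unfolding QA_def pA_def by simp
  ultimately show False using limQ[of QA] lim_is_parity odd by metis
qed

end

lemma cfg_cong: "(\<forall>k<n. Ls k = Ls' k \<and> ps k = ps' k) \<Longrightarrow> cfg I J N Ls ps n = cfg I J N Ls' ps' n"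
  by (induction n) (auto simp: Let_def split_beta)

theorem lemma3:
  fixes \<Sigma> :: "'a set" and A B :: "'a aut" and I J :: "nat set"
    and g :: "nat \<Rightarrow> 'a trans \<Rightarrow> 'a trans"
    and t :: "bool list \<Rightarrow> 'a" and \<rho>B :: "bool list \<Rightarrow> 'a trans"
  assumes "finite \<Sigma>"
    and "is_aut \<Sigma> I A" and "guidable \<Sigma> A"
    and "index J" and "Min J \<in> {1, 2}"
    and "is_aut \<Sigma> J B" and "lang \<Sigma> B = lang \<Sigma> A"
    and "is_guiding_fn A B g" and "preserves_acc \<Sigma> A B g"
    and "t \<in> lang \<Sigma> A" and "accepting_run B t \<rho>B"
  shows "eve_wins_reg I J (card (states A) * card (states B) + 1)
           (run_graph A (guided_run A g \<rho>B))"
proof -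
  interpret T: tr \<Sigma> A B I J g t \<rho>B
    using assms unfolding lang_def by unfold_locales auto
  define K where "K = card (states A) * card (states B)"
  define N where "N = K + 1"
  define \<rho>A where "\<rho>A = guided_run A g \<rho>B"
  define E where "E = fst (run_graph A \<rho>A)"
  have E: "E = {(u, edge_pri A (\<rho>A u) d, u @ [d]) | u d. True}" unfolding E_def run_graph_def by simp
  have v0: "snd (run_graph A \<rho>A) = []" unfolding run_graph_def by simp
  define hLs where "hLs hist k = fst (snd (hist ! k))" for hist :: "(bool list \<times> nat \<times> bool list) list" and k
  define hps where "hps hist k = edge_pri B (\<rho>B (fst (hist ! k))) (last (snd (snd (hist ! k))))"
    for hist :: "(bool list \<times> nat \<times> bool list) list" and k
  define \<sigma> where "\<sigma> hist = (jsel J (fst (cfg I J N (hLs hist) (hps hist) (length hist - 1)))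
       (hLs hist (length hist - 1)) (hps hist (length hist - 1)), hLs hist (length hist - 1))"
    for hist
  show ?thesis
    unfolding eve_wins_reg_def N_def[symmetric] K_def[symmetric] \<rho>A_def[symmetric]
  proof (intro exI[of _ \<sigma>] allI impI)
    fix e assume play: "is_play (fst (run_graph A \<rho>A)) (snd (run_graph A \<rho>A)) e"
    have eE: "e n \<in> E" for n using play unfolding is_play_def E_def by simp
    have e0: "fst (e 0) = []" using play v0 unfolding is_play_def by simp
    have eS: "fst (e (Suc n)) = snd (snd (e n))" for n using play unfolding is_play_def by simp
    define \<beta> where "\<beta> n = last (snd (snd (e n)))" for n
    have eform: "e n = (fst (e n), edge_pri A (\<rho>A (fst (e n))) (\<beta> n), fst (e n) @ [\<beta> n])" for n
    proof -
      obtain u d where "e n = (u, edge_pri A (\<rho>A u) d, u @ [d])" using eE[of n] E by blast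
      then show ?thesis unfolding \<beta>_def by simp
    qed
    have xn: "fst (e n) = map \<beta> [0..<n]" for n
    proof (induction n)
      case 0 then show ?case using e0 by simp
    next
      case (Suc n)
      have "fst (e (Suc n)) = fst (e n) @ [\<beta> n]" using eS[of n] eform[of n] by (metis snd_conv)
      then show ?case using Suc by simp
    qed
    define Ls where "Ls n = fst (snd (e n))" for n
    define ps where "ps n = edge_pri B (\<rho>B (fst (e n))) (\<beta> n)" for n
    have LspA: "Ls n = T.pA \<beta> n" for n
      unfolding Ls_def T.pA_def using eform[of n] xn[of n] \<rho>A_def by (metis fst_conv snd_conv)
    have pspB: "ps n = T.pB \<beta> n" for n unfolding ps_def T.pB_def xn ..
    define \<pi> where "\<pi> n = (T.GS (map \<beta> [0..<n]), fst (\<rho>B (map \<beta> [0..<n])))" for n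
    interpret G: gm I J N K Ls ps \<pi> "states A \<times> states B"
    proof (unfold_locales)
      show "index I" using assms(2) unfolding is_aut_def by simp
      show "index J" by (rule assms(4))
      show "Min J \<in> {1,2}" by (rule assms(5))
      show "Ls n \<in> I" for n using LspA T.priA unfolding T.pA_def by simp
      show "ps n \<in> J" for n using pspB T.priB unfolding T.pB_def by simp
      show "parity_acc ps" using T.pB_acc pspB by (metis ext)
      show "finite (states A \<times> states B)" using assms(2,6) unfolding is_aut_def by simp
      show "card (states A \<times> states B) \<le> K" unfolding K_def by (simp add: card_cartesian_product)
      show "\<pi> n \<in> states A \<times> states B" for n unfolding \<pi>_def using T.GS_in T.stateB by simp
      show "N = K + 1" by (rule N_def)
      fix a b assume "a < b" "\<pi> a = \<pi> b" "\<forall>n\<in>{a..<b}. ps n \<le> ps a" "even (ps a)"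
      then show "even (Max (Ls ` {a..<b}))"
        using T.pump[of a b \<beta>] unfolding \<pi>_def pspB LspA by auto
    qed
    have ch: "\<sigma> (map e [0..<Suc n]) = (G.jn n, Ls n)" for n
    proof -
      define hist where "hist = map e [0..<Suc n]"
      have lh: "length hist - 1 = n" unfolding hist_def by simp
      have hk: "hist ! k = e k" if "k \<le> n" for k unfolding hist_def using that
        by (subst nth_map_upt) auto
      have hL: "hLs hist k = Ls k" if "k \<le> n" for k unfolding hLs_def Ls_def using hk that by simp
      have hp: "hps hist k = ps k" if "k \<le> n" for k
        unfolding hps_def ps_def \<beta>_def using hk that by simp
      have "cfg I J N (hLs hist) (hps hist) n = cfg I J N Ls ps n"
        by (rule cfg_cong) (use hL hp in auto)
      then show ?thesis unfolding \<sigma>_def hist_def[symmetric] lh G.jn_def G.r_def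
        using hL hp by simp
    qed
    define chf where "chf = (\<lambda>n. \<sigma> (map e [0..<Suc n]))"
    have chf: "chf n = (G.jn n, Ls n)" for n unfolding chf_def using ch .
    have rc: "reg_conf I J N e chf n = cfg I J N Ls ps n" for n
    proof (induction n)
      case 0 then show ?case by simp
    next
      case (Suc n)
      show ?case
        using Suc chf[of n] unfolding G.jn_def G.r_def G.c_def Ls_def
        by (simp add: Let_def split_beta)
    qed
    have ro: "reg_out I J N e chf n = (G.w n, fst (snd (reg_output J N (G.r n) (G.c n) (G.jn n))))" for n
      unfolding reg_out_def rc G.w_def G.r_def G.c_def chf by (simp add: split_beta Let_def)
    show "let ch = \<lambda>n. \<sigma> (map e [0..<Suc n])
          in (\<forall>n. legal_choice I J (fst (snd (e n))) (ch n) \<and> \<not> snd (reg_out I J N e ch n)) \<and>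
             parity_acc (\<lambda>n. fst (reg_out I J N e ch n))"
      unfolding Let_def chf_def[symmetric]
    proof (intro conjI allI)
      fix n
      show "legal_choice I J (fst (snd (e n))) (chf n)"
        unfolding legal_choice_def chf Ls_def[symmetric] using G.jn_R G.Ls by simp
      show "\<not> snd (reg_out I J N e chf n)" using ro G.no_loss by simp
    next
      show "parity_acc (\<lambda>n. fst (reg_out I J N e chf n))" using ro G.parity_w by simp
    qed
  qed
qed

end
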